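(* Let $\vec{\mathcal G}=([n],E)$ be a directed graph with $m=|E|$ edges, every vertex having at least one outgoing edge and having at least one directed cycle. Let the weights $(r_{ij})_{(i,j)\in E}$ be independent absolutely continuous random variables, where $r_{ij}$ has density $f_{ij}$ and there is $\phi>0$ with $f_{ij}(y)\le\phi$ for all $(i,j)\in E$ and $y\in\mathbb R$. For $k\in[n]$ let $X^{(k)}_{ij}(r)$ be the $k$-th break point (in increasing order) of the function $x\mapsto\lambda(x,r_{-ij})$, with the convention $X^{(k)}_{ij}=0$ if this function has fewer than $k$ break points. Then for every $\alpha>0$, $$\mathbb P\bigl(\exists (i,j)\in E,\ \exists k\in[n]:\ |r_{ij}-X^{(k)}_{ij}|\le\alpha\bigr)\le 2\alpha n m\phi .$$
   Context: For weights $r$, $\lambda(r)$ is the minimum over all directed cycles of $\vec{\mathcal G}$ of the mean weight (sum of edge weights divided by number of edges) of the cycle; the function $x\mapsto\lambda(x,r_{-ij})$ is continuous and piecewise affine with at most $n$ break points. Here $r_{-ij}$ is $r$ with coordinate $ij$ removed and $(x,r_{-ij})$ is $r$ with coordinate $ij$ replaced by $x$. *)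

theory Defs
  imports "HOL-Probability.Probability"
begin

type_synonym edge = "nat \<times> nat"

text \<open>Self-loops give cycles of length 1.\<close>
definition dcycles :: "nat \<Rightarrow> edge set \<Rightarrow> nat list set" where
  "dcycles n E = {c. c \<noteq> [] \<and> distinct c \<and> set c \<subseteq> {1..n} \<and>
      (\<forall>t<length c. (c ! t, c ! ((t + 1) mod length c)) \<in> E)}"

definition cycle_edges :: "nat list \<Rightarrow> edge list" where
  "cycle_edges c = map (\<lambda>t. (c ! t, c ! ((t + 1) mod length c))) [0..<length c]"

definition cycle_mean :: "(edge \<Rightarrow> real) \<Rightarrow> nat list \<Rightarrow> real" where
  "cycle_mean r c = (\<Sum>e\<leftarrow>cycle_edges c. r e) / real (length c)"

definition min_cycle_mean :: "nat \<Rightarrow> edge set \<Rightarrow> (edge \<Rightarrow> real) \<Rightarrow> real" where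
  "min_cycle_mean n E r = Min (cycle_mean r ` dcycles n E)"

definition break_points :: "(real \<Rightarrow> real) \<Rightarrow> real set" where
  "break_points g = {x. \<not> (\<exists>\<epsilon>>0. \<exists>a b. \<forall>y. \<bar>y - x\<bar> < \<epsilon> \<longrightarrow> g y = a * y + b)}"

definition kth_break :: "nat \<Rightarrow> edge set \<Rightarrow> edge \<Rightarrow> nat \<Rightarrow> (edge \<Rightarrow> real) \<Rightarrow> real" where
  "kth_break n E e k r =
     (let B = break_points (\<lambda>x. min_cycle_mean n E (r(e := x)))
      in if finite B \<and> 1 \<le> k \<and> k \<le> card B then sorted_list_of_set B ! (k - 1) else 0)"

end

theory Submission
  imports Defs
begin


lemma prob_close:
  fixes X Y :: "'a \<Rightarrow> real" and g :: "real \<Rightarrow> real"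
  assumes P: "prob_space M"
    and D: "distributed M lborel X (\<lambda>y. ennreal (g y))"
    and gb: "\<forall>y. g y \<le> \<phi>"
    and I: "prob_space.indep_var M borel X borel Y"
    and a: "\<alpha> \<ge> 0" and p0: "\<phi> \<ge> 0"
  shows "measure M {\<omega> \<in> space M. \<bar>X \<omega> - Y \<omega>\<bar> \<le> \<alpha>} \<le> 2 * \<alpha> * \<phi>"
proof -
  interpret prob_space M by fact
  have rvX: "random_variable borel X" and rvY: "random_variable borel Y"
    and eq: "distr M borel X \<Otimes>\<^sub>M distr M borel Y = distr M (borel \<Otimes>\<^sub>M borel) (\<lambda>x. (X x, Y x))"
    using I by (simp_all add: indep_var_distribution_eq)
  interpret DX: prob_space "distr M borel X" by (rule prob_space_distr) fact
  interpret DY: prob_space "distr M borel Y" by (rule prob_space_distr) fact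
  interpret XY: pair_sigma_finite "distr M borel X" "distr M borel Y" ..
  define S where "S = {p::real\<times>real. \<bar>fst p - snd p\<bar> \<le> \<alpha>}"
  have "Measurable.pred (borel \<Otimes>\<^sub>M borel) (\<lambda>p::real\<times>real. \<bar>fst p - snd p\<bar> \<le> \<alpha>)" by measurable
  then have S: "S \<in> sets (borel \<Otimes>\<^sub>M borel)" unfolding S_def pred_def by (simp add: space_pair_measure)
  have gm: "(\<lambda>y. ennreal (g y)) \<in> borel_measurable lborel" using D by (simp add: distributed_def)
  have slice: "emeasure (distr M borel X) ((\<lambda>x. (x, y)) -` S) \<le> ennreal (2 * \<alpha> * \<phi>)" for y
  proof -
    have "(\<lambda>x. (x, y)) -` S = {y - \<alpha> .. y + \<alpha>}" unfolding S_def by auto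
    then have "emeasure (distr M borel X) ((\<lambda>x. (x, y)) -` S) = emeasure (distr M lborel X) {y - \<alpha> .. y + \<alpha>}"
    proof -
      have "emeasure (distr M lborel X) {y - \<alpha> .. y + \<alpha>} = emeasure M (X -` {y - \<alpha> .. y + \<alpha>} \<inter> space M)"
        using D by (intro emeasure_distr) (auto simp: distributed_def)
      moreover have "emeasure (distr M borel X) {y - \<alpha> .. y + \<alpha>} = emeasure M (X -` {y - \<alpha> .. y + \<alpha>} \<inter> space M)"
        using rvX by (intro emeasure_distr) auto
      ultimately show ?thesis using \<open>(\<lambda>x. (x, y)) -` S = {y - \<alpha> .. y + \<alpha>}\<close> by simp
    qed
    also have "\<dots> = emeasure (density lborel (\<lambda>y. ennreal (g y))) {y - \<alpha> .. y + \<alpha>}"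
      using D by (simp add: distributed_def)
    also have "\<dots> = (\<integral>\<^sup>+ x. ennreal (g x) * indicator {y - \<alpha> .. y + \<alpha>} x \<partial>lborel)"
      using gm by (simp add: emeasure_density)
    also have "\<dots> \<le> (\<integral>\<^sup>+ x. ennreal \<phi> * indicator {y - \<alpha> .. y + \<alpha>} x \<partial>lborel)"
      using gb by (intro nn_integral_mono) (auto intro: mult_right_mono ennreal_leI simp: indicator_def)
    also have "\<dots> = ennreal \<phi> * emeasure lborel {y - \<alpha> .. y + \<alpha>}"
      by (simp add: nn_integral_cmult_indicator)
    also have "\<dots> = ennreal (2 * \<alpha> * \<phi>)" using a p0
      by (simp add: ennreal_mult'[symmetric] mult.commute)
    finally show ?thesis .
  qed
  have "{\<omega> \<in> space M. \<bar>X \<omega> - Y \<omega>\<bar> \<le> \<alpha>} = (\<lambda>x. (X x, Y x)) -` S \<inter> space M"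
    unfolding S_def by auto
  then have "emeasure M {\<omega> \<in> space M. \<bar>X \<omega> - Y \<omega>\<bar> \<le> \<alpha>} = emeasure (distr M (borel \<Otimes>\<^sub>M borel) (\<lambda>x. (X x, Y x))) S"
    using S rvX rvY by (simp add: emeasure_distr)
  also have "\<dots> = emeasure (distr M borel X \<Otimes>\<^sub>M distr M borel Y) S" by (simp add: eq)
  also have "\<dots> = (\<integral>\<^sup>+y. emeasure (distr M borel X) ((\<lambda>x. (x, y)) -` S) \<partial>distr M borel Y)"
    using S by (intro XY.emeasure_pair_measure_alt2) simp
  also have "\<dots> \<le> (\<integral>\<^sup>+y. ennreal (2 * \<alpha> * \<phi>) \<partial>distr M borel Y)"
    by (intro nn_integral_mono slice)
  also have "\<dots> = ennreal (2 * \<alpha> * \<phi>)" using DY.emeasure_space_1 by simp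
  finally show ?thesis using a p0 by (simp add: emeasure_eq_measure)
qed


lemma bp_char:
  fixes I :: "'i set" and a b :: "'i \<Rightarrow> real"
  assumes fin: "finite I" and ne: "I \<noteq> {}"
  defines "G \<equiv> \<lambda>x. Min ((\<lambda>i. a i * x + b i) ` I)"
  shows "x \<in> break_points G \<longleftrightarrow>
    (\<exists>i\<in>I. \<exists>j\<in>I. a i \<noteq> a j \<and> a i * x + b i = G x \<and> a j * x + b j = G x)"
proof
  have Gle: "G y \<le> a i * y + b i" if "i \<in> I" for i y
    unfolding G_def using fin that by (intro Min_le) auto
  assume "\<exists>i\<in>I. \<exists>j\<in>I. a i \<noteq> a j \<and> a i * x + b i = G x \<and> a j * x + b j = G x"
  then obtain i j where ij: "i \<in> I" "j \<in> I" "a i \<noteq> a j" "a i * x + b i = G x" "a j * x + b j = G x" by blast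
  show "x \<in> break_points G"
  proof (rule ccontr)
    assume "x \<notin> break_points G"
    then obtain \<epsilon> A B where e: "\<epsilon> > 0" and aff: "\<And>y. \<bar>y - x\<bar> < \<epsilon> \<Longrightarrow> G y = A * y + B"
      unfolding break_points_def by auto
    have slope: "A = a k" if k: "k \<in> I" "a k * x + b k = G x" for k
    proof -
      define d where "d = \<epsilon> / 2"
      have d: "d > 0" "\<bar>(x + d) - x\<bar> < \<epsilon>" "\<bar>(x - d) - x\<bar> < \<epsilon>" using e by (auto simp: d_def)
      have Gx: "G x = A * x + B" using aff e by simp
      have 1: "A * (x + d) + B \<le> a k * (x + d) + b k" using aff[OF d(2)] Gle[OF k(1), of "x+d"] by linarith
      have 2: "A * (x - d) + B \<le> a k * (x - d) + b k" using aff[OF d(3)] Gle[OF k(1), of "x-d"] by linarith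
      from 1 k(2) Gx have "A * d \<le> a k * d" by (simp add: algebra_simps)
      then have "A \<le> a k" using d(1) by simp
      moreover from 2 k(2) Gx have "a k * d \<le> A * d" by (simp add: algebra_simps)
      then have "a k \<le> A" using d(1) by simp
      ultimately show ?thesis by simp
    qed
    from slope[OF ij(1,4)] slope[OF ij(2,5)] ij(3) show False by simp
  qed
next
  have Gle: "G y \<le> a i * y + b i" if "i \<in> I" for i y
    unfolding G_def using fin that by (intro Min_le) auto
  have Gin: "\<exists>i\<in>I. G y = a i * y + b i" for y
  proof -
    have "G y \<in> (\<lambda>i. a i * y + b i) ` I" unfolding G_def using fin ne by (intro Min_in) auto
    then show ?thesis by auto
  qed
  assume x: "x \<in> break_points G"
  show "\<exists>i\<in>I. \<exists>j\<in>I. a i \<noteq> a j \<and> a i * x + b i = G x \<and> a j * x + b j = G x"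
  proof (rule ccontr)
    assume H: "\<not> ?thesis"
    obtain i0 where i0: "i0 \<in> I" "G x = a i0 * x + b i0" using Gin by blast
    define s where "s = a i0"
    define Mx where "Mx = {i\<in>I. a i * x + b i = G x}"
    have Ms: "a i = s" if "i \<in> Mx" for i using H that i0 unfolding Mx_def s_def by force
    define gap where "gap = (\<lambda>j. (a j * x + b j - G x) / (\<bar>a j - s\<bar> + 1))"
    have gpos: "gap j > 0" if "j \<in> I - Mx" for j
    proof -
      have "G x \<le> a j * x + b j" using Gle that by auto
      moreover have "a j * x + b j \<noteq> G x" using that unfolding Mx_def by auto
      ultimately show ?thesis unfolding gap_def by (intro divide_pos_pos) auto
    qed
    define \<epsilon> where "\<epsilon> = (if I - Mx = {} then 1 else Min (gap ` (I - Mx)))"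
    have e: "\<epsilon> > 0" unfolding \<epsilon>_def using gpos fin by auto
    have ele: "\<epsilon> \<le> gap j" if "j \<in> I - Mx" for j
      unfolding \<epsilon>_def using that fin by auto
    have "\<forall>y. \<bar>y - x\<bar> < \<epsilon> \<longrightarrow> G y = s * y + (G x - s * x)"
    proof (intro allI impI)
      fix y assume y: "\<bar>y - x\<bar> < \<epsilon>"
      have ge: "s * y + (G x - s * x) \<le> a j * y + b j" if j: "j \<in> I" for j
      proof (cases "j \<in> Mx")
        case True
        then show ?thesis using Ms[OF True] unfolding Mx_def by (auto simp: algebra_simps)
      next
        case False
        then have jj: "j \<in> I - Mx" using j by auto
        define D where "D = a j * x + b j - G x"
        have "\<bar>y - x\<bar> < D / (\<bar>a j - s\<bar> + 1)" using y ele[OF jj] unfolding gap_def D_def by simp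
        then have "\<bar>y - x\<bar> * (\<bar>a j - s\<bar> + 1) < D"
          by (simp add: pos_less_divide_eq add_pos_nonneg)
        moreover have "\<bar>(a j - s) * (y - x)\<bar> \<le> \<bar>y - x\<bar> * (\<bar>a j - s\<bar> + 1)"
        proof -
          have "\<bar>(a j - s) * (y - x)\<bar> = \<bar>y - x\<bar> * \<bar>a j - s\<bar>" by (simp add: abs_mult)
          then show ?thesis by (simp add: distrib_left)
        qed
        ultimately have "\<bar>(a j - s) * (y - x)\<bar> < D" by linarith
        then have "- D < (a j - s) * (y - x)" by linarith
        then show ?thesis unfolding D_def by (simp add: algebra_simps)
      qed
      have "G y = s * y + (G x - s * x)"
      proof (rule antisym)
        show "G y \<le> s * y + (G x - s * x)" using Gle[OF i0(1), of y] i0(2) unfolding s_def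
          by (simp add: algebra_simps)
        obtain k where "k \<in> I" "G y = a k * y + b k" using Gin by blast
        then show "s * y + (G x - s * x) \<le> G y" using ge by simp
      qed
      then show "G y = s * y + (G x - s * x)" .
    qed
    then have "x \<notin> break_points G" unfolding break_points_def using e by blast
    with x show False by simp
  qed
qed



lemma card_image_meas:
  fixes g :: "'p \<Rightarrow> 'w \<Rightarrow> real"
  assumes "finite P" and g: "\<And>p. p \<in> P \<Longrightarrow> g p \<in> borel_measurable N"
    and R: "\<And>p. p \<in> P \<Longrightarrow> Measurable.pred N (R p)"
  shows "(\<lambda>\<omega>. card ((\<lambda>p. g p \<omega>) ` {p\<in>P. R p \<omega>})) \<in> measurable N (count_space UNIV)"
  using assms
proof (induction P rule: finite_induct)
  case empty
  then show ?case by simp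
next
  case (insert q P)
  have eq: "card ((\<lambda>p. g p \<omega>) ` {p\<in>insert q P. R p \<omega>}) =
     (if R q \<omega> \<and> (\<forall>p\<in>P. R p \<omega> \<longrightarrow> g p \<omega> \<noteq> g q \<omega>) then Suc (card ((\<lambda>p. g p \<omega>) ` {p\<in>P. R p \<omega>}))
      else card ((\<lambda>p. g p \<omega>) ` {p\<in>P. R p \<omega>}))" for \<omega>
  proof (cases "R q \<omega>")
    case True
    then have "(\<lambda>p. g p \<omega>) ` {p\<in>insert q P. R p \<omega>} = insert (g q \<omega>) ((\<lambda>p. g p \<omega>) ` {p\<in>P. R p \<omega>})"
      by auto
    then show ?thesis using insert.hyps(1) by (auto simp: card_insert_if image_iff)
  next
    case False
    then have "{p\<in>insert q P. R p \<omega>} = {p\<in>P. R p \<omega>}" by auto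
    then show ?thesis using False by simp
  qed
  have IH: "(\<lambda>\<omega>. card ((\<lambda>p. g p \<omega>) ` {p\<in>P. R p \<omega>})) \<in> measurable N (count_space UNIV)"
    using insert by auto
  have gq: "g q \<in> borel_measurable N" and Rq: "Measurable.pred N (R q)" using insert by auto
  have gP: "\<And>p. p \<in> P \<Longrightarrow> g p \<in> borel_measurable N" and RP: "\<And>p. p \<in> P \<Longrightarrow> Measurable.pred N (R p)"
    using insert by auto
  have pr: "Measurable.pred N (\<lambda>\<omega>. R q \<omega> \<and> (\<forall>p\<in>P. R p \<omega> \<longrightarrow> g p \<omega> \<noteq> g q \<omega>))"
    using gq Rq gP RP insert.hyps(1) by measurable
  show ?case unfolding eq using pr IH by measurable
qed



lemma sorted_nth_le_iff:
  fixes B :: "real set"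
  assumes fin: "finite B" and k: "1 \<le> k" "k \<le> card B"
  shows "sorted_list_of_set B ! (k - 1) \<le> t \<longleftrightarrow> k \<le> card {x\<in>B. x \<le> t}"
proof -
  define xs where "xs = sorted_list_of_set B"
  have s: "sorted xs" "distinct xs" "set xs = B" "length xs = card B"
    using fin by (auto simp: xs_def)
  show ?thesis unfolding xs_def[symmetric]
  proof
    assume le: "xs ! (k - 1) \<le> t"
    have "set (take k xs) \<subseteq> {x\<in>B. x \<le> t}"
    proof
      fix x assume "x \<in> set (take k xs)"
      then obtain i where i: "i < k" "i < length xs" "x = xs ! i"
        by (auto simp: in_set_conv_nth)
      have "xs ! i \<le> xs ! (k - 1)" using s k i by (intro sorted_nth_mono) auto
      then show "x \<in> {x\<in>B. x \<le> t}" using le i s(3) by auto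
    qed
    moreover have "card (set (take k xs)) = k"
      using s k by (simp add: distinct_card)
    ultimately show "k \<le> card {x\<in>B. x \<le> t}" using fin
      by (metis (no_types, lifting) card_mono finite_subset mem_Collect_eq subsetI)
  next
    assume c: "k \<le> card {x\<in>B. x \<le> t}"
    show "xs ! (k - 1) \<le> t"
    proof (rule ccontr)
      assume gt: "\<not> xs ! (k - 1) \<le> t"
      have "{x\<in>B. x \<le> t} \<subseteq> set (take (k - 1) xs)"
      proof
        fix x assume x: "x \<in> {x\<in>B. x \<le> t}"
        then obtain i where i: "i < length xs" "x = xs ! i" using s(3) by (auto simp: in_set_conv_nth)
        have "i < k - 1"
        proof (rule ccontr)
          assume "\<not> i < k - 1"
          then have "xs ! (k - 1) \<le> xs ! i" using s i k by (intro sorted_nth_mono) auto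
          then show False using gt x i by auto
        qed
        then show "x \<in> set (take (k - 1) xs)" using i by (auto simp: in_set_conv_nth)
      qed
      then have "card {x\<in>B. x \<le> t} \<le> card (set (take (k - 1) xs))" by (intro card_mono) auto
      also have "\<dots> \<le> k - 1" using card_length[of "take (k - 1) xs"] by simp
      finally show False using c k by simp
    qed
  qed
qed

definition kb :: "nat \<Rightarrow> (real \<Rightarrow> real) \<Rightarrow> real" where
  "kb k g = (let B = break_points g in if finite B \<and> 1 \<le> k \<and> k \<le> card B then sorted_list_of_set B ! (k - 1) else 0)"

lemma kth_break_kb: "kth_break n E e k r = kb k (\<lambda>x. min_cycle_mean n E (r(e := x)))"
  by (simp add: kth_break_def kb_def)

lemma kb_meas:
  fixes I :: "'i set" and a :: "'i \<Rightarrow> real" and b :: "'i \<Rightarrow> 'w \<Rightarrow> real"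
  assumes fin: "finite I" and ne: "I \<noteq> {}" and bm: "\<And>i. i \<in> I \<Longrightarrow> b i \<in> borel_measurable N"
  shows "(\<lambda>\<omega>. kb k (\<lambda>x. Min ((\<lambda>i. a i * x + b i \<omega>) ` I))) \<in> borel_measurable N"
proof -
  define Gw where "Gw = (\<lambda>\<omega> x. Min ((\<lambda>i. a i * x + b i \<omega>) ` I))"
  define cr where "cr = (\<lambda>p \<omega>. (b (snd p) \<omega> - b (fst p) \<omega>) / (a (fst p) - a (snd p)))"
  define Q where "Q = (\<lambda>p \<omega>. a (fst p) \<noteq> a (snd p) \<and> a (fst p) * cr p \<omega> + b (fst p) \<omega> = Gw \<omega> (cr p \<omega>)
      \<and> a (snd p) * cr p \<omega> + b (snd p) \<omega> = Gw \<omega> (cr p \<omega>))"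
  have B: "break_points (Gw \<omega>) = (\<lambda>p. cr p \<omega>) ` {p\<in>I\<times>I. Q p \<omega>}" for \<omega>
  proof (intro set_eqI iffI)
    fix x assume "x \<in> break_points (Gw \<omega>)"
    then obtain i j where ij: "i \<in> I" "j \<in> I" "a i \<noteq> a j" "a i * x + b i \<omega> = Gw \<omega> x" "a j * x + b j \<omega> = Gw \<omega> x"
      using bp_char[OF fin ne, where a=a and b="\<lambda>i. b i \<omega>" and x=x] unfolding Gw_def by blast
    have "(a i - a j) * x = b j \<omega> - b i \<omega>" using ij by (simp add: algebra_simps)
    then have x: "x = cr (i, j) \<omega>" using ij(3) unfolding cr_def by (simp add: field_simps)
    then have "Q (i, j) \<omega>" using ij unfolding Q_def by simp
    then show "x \<in> (\<lambda>p. cr p \<omega>) ` {p\<in>I\<times>I. Q p \<omega>}" using x ij by force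
  next
    fix x assume "x \<in> (\<lambda>p. cr p \<omega>) ` {p\<in>I\<times>I. Q p \<omega>}"
    then obtain i j where ij: "i \<in> I" "j \<in> I" "Q (i, j) \<omega>" "x = cr (i, j) \<omega>" by auto
    then have q: "a i \<noteq> a j" "a i * x + b i \<omega> = Gw \<omega> x" "a j * x + b j \<omega> = Gw \<omega> x"
      unfolding Q_def by simp_all
    show "x \<in> break_points (Gw \<omega>)"
      using bp_char[OF fin ne, where a=a and b="\<lambda>i. b i \<omega>" and x=x] q ij(1,2) unfolding Gw_def by blast
  qed
  have finB: "finite (break_points (Gw \<omega>))" for \<omega> unfolding B using fin by auto
  have crm: "cr p \<in> borel_measurable N" if "p \<in> I \<times> I" for p
    using that bm unfolding cr_def by auto
  have Gm: "(\<lambda>\<omega>. Gw \<omega> (cr p \<omega>)) \<in> borel_measurable N" if "p \<in> I \<times> I" for p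
    unfolding Gw_def
    by (rule borel_measurable_Min[OF fin]) (use bm crm[OF that] in auto)
  have Qm: "Measurable.pred N (Q p)" if "p \<in> I \<times> I" for p
  proof -
    have "b (fst p) \<in> borel_measurable N" "b (snd p) \<in> borel_measurable N" using that bm by auto
    then show ?thesis unfolding Q_def using Gm[OF that] crm[OF that] by measurable
  qed
  have c1: "(\<lambda>\<omega>. card ((\<lambda>p. cr p \<omega>) ` {p\<in>I\<times>I. Q p \<omega>})) \<in> measurable N (count_space UNIV)"
    using fin by (intro card_image_meas crm Qm) auto
  have c2: "(\<lambda>\<omega>. card ((\<lambda>p. cr p \<omega>) ` {p\<in>I\<times>I. Q p \<omega> \<and> cr p \<omega> \<le> t})) \<in> measurable N (count_space UNIV)" for t
    using fin crm Qm by (intro card_image_meas crm) auto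
  have le: "kb k (Gw \<omega>) \<le> t \<longleftrightarrow>
      (1 \<le> k \<and> k \<le> card ((\<lambda>p. cr p \<omega>) ` {p\<in>I\<times>I. Q p \<omega>}) \<and> k \<le> card ((\<lambda>p. cr p \<omega>) ` {p\<in>I\<times>I. Q p \<omega> \<and> cr p \<omega> \<le> t}))
      \<or> (\<not> (1 \<le> k \<and> k \<le> card ((\<lambda>p. cr p \<omega>) ` {p\<in>I\<times>I. Q p \<omega>})) \<and> 0 \<le> t)" for \<omega> t
  proof -
    have e: "{x \<in> break_points (Gw \<omega>). x \<le> t} = (\<lambda>p. cr p \<omega>) ` {p\<in>I\<times>I. Q p \<omega> \<and> cr p \<omega> \<le> t}"
      unfolding B by auto
    show ?thesis
    proof (cases "1 \<le> k \<and> k \<le> card (break_points (Gw \<omega>))")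
      case True
      then show ?thesis unfolding kb_def Let_def e[symmetric] B[symmetric]
        using finB[of \<omega>] sorted_nth_le_iff[OF finB[of \<omega>], of k t] by simp
    next
      case False
      then show ?thesis unfolding kb_def Let_def e[symmetric] B[symmetric] by auto
    qed
  qed
  have "(\<lambda>\<omega>. kb k (Gw \<omega>)) \<in> borel_measurable N"
    unfolding borel_measurable_iff_le
  proof
    fix t
    have "Measurable.pred N (\<lambda>\<omega>. kb k (Gw \<omega>) \<le> t)"
      unfolding le using c1 c2[of t] by measurable
    then show "{w \<in> space N. kb k (Gw w) \<le> t} \<in> sets N" by (simp add: pred_def)
  qed
  then show ?thesis unfolding Gw_def .
qed



lemma sum_list_upd:
  fixes w :: "edge \<Rightarrow> real"
  shows "sum_list (map (w(e := x)) xs) = real (length (filter (\<lambda>e'. e' = e) xs)) * x + sum_list (map w (filter (\<lambda>e'. e' \<noteq> e) xs))"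
  by (induction xs) (auto simp: algebra_simps)

lemma cycle_edges_in: "c \<in> dcycles n E \<Longrightarrow> set (cycle_edges c) \<subseteq> E"
  unfolding dcycles_def cycle_edges_def by auto

lemma dcycles_finite: "finite (dcycles n E)"
proof -
  have "dcycles n E \<subseteq> {xs. set xs \<subseteq> {1..n} \<and> length xs \<le> n}"
  proof
    fix c assume "c \<in> dcycles n E"
    then have c: "distinct c" "set c \<subseteq> {1..n}" unfolding dcycles_def by auto
    then have "length c = card (set c)" by (simp add: distinct_card)
    also have "\<dots> \<le> card {1..n}" using c by (intro card_mono) auto
    finally show "c \<in> {xs. set xs \<subseteq> {1..n} \<and> length xs \<le> n}" using c by simp
  qed
  then show ?thesis by (rule finite_subset) (rule finite_lists_length_le, simp)
qed

lemma sumlist_meas: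
  fixes xs :: "edge list"
  shows "set xs \<subseteq> J \<Longrightarrow> (\<lambda>w. sum_list (map w xs)) \<in> borel_measurable (PiM J (\<lambda>_. borel :: real measure))"
proof (induction xs)
  case Nil
  then show ?case by simp
next
  case (Cons y xs)
  then have IH: "(\<lambda>w. sum_list (map w xs)) \<in> borel_measurable (PiM J (\<lambda>_. borel :: real measure))" by simp
  have yJ: "y \<in> J" using Cons.prems by simp
  have "(\<lambda>w. w y) \<in> borel_measurable (PiM J (\<lambda>_. borel :: real measure))"
    using measurable_component_singleton[OF yJ, of "\<lambda>_. borel"] by simp
  then show ?case using IH by (simp add: borel_measurable_add)
qed



theorem mainTheorem3:
  fixes n :: nat and E :: "edge set" and M :: "'a measure"
    and r :: "edge \<Rightarrow> 'a \<Rightarrow> real" and f :: "edge \<Rightarrow> real \<Rightarrow> real"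
    and \<phi> \<alpha> :: real
  assumes "prob_space M"
    and "E \<subseteq> {1..n} \<times> {1..n}"
    and "\<forall>i\<in>{1..n}. \<exists>j. (i, j) \<in> E"
    and "dcycles n E \<noteq> {}"
    and "prob_space.indep_vars M (\<lambda>_. borel) r E"
    and "\<forall>e\<in>E. distributed M lborel (r e) (\<lambda>y. ennreal (f e y))"
    and "\<phi> > 0"
    and "\<forall>e\<in>E. \<forall>y. f e y \<le> \<phi>"
    and "\<alpha> > 0"
  shows "measure M {\<omega> \<in> space M. \<exists>e\<in>E. \<exists>k\<in>{1..n}.
            \<bar>r e \<omega> - kth_break n E e k (\<lambda>e'. r e' \<omega>)\<bar> \<le> \<alpha>}
         \<le> 2 * \<alpha> * real n * real (card E) * \<phi>"
proof -
  interpret prob_space M by fact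
  have finE: "finite E" using assms(2) by (rule finite_subset) simp
  define C where "C = dcycles n E"
  have finC: "finite C" "C \<noteq> {}" unfolding C_def using dcycles_finite assms(4) by auto
  define Y where "Y = (\<lambda>e k \<omega>. kth_break n E e k (\<lambda>e'. r e' \<omega>))"
  have key: "measure M {\<omega>\<in>space M. \<bar>r e \<omega> - Y e k \<omega>\<bar> \<le> \<alpha>} \<le> 2 * \<alpha> * \<phi> \<and>
             {\<omega>\<in>space M. \<bar>r e \<omega> - Y e k \<omega>\<bar> \<le> \<alpha>} \<in> events" if e: "e \<in> E" for e k
  proof -
    define a where "a = (\<lambda>c. real (length (filter (\<lambda>e'. e' = e) (cycle_edges c))) / real (length c))"
    define b where "b = (\<lambda>c (w::edge\<Rightarrow>real). sum_list (map w (filter (\<lambda>e'. e' \<noteq> e) (cycle_edges c))) / real (length c))"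
    define F where "F = (\<lambda>w. kb k (\<lambda>x. Min ((\<lambda>c. a c * x + b c w) ` C)))"
    have cm: "cycle_mean (w(e:=x)) c = a c * x + b c w" for w x c
      unfolding cycle_mean_def a_def b_def sum_list_upd by (simp add: add_divide_distrib)
    have mcm: "min_cycle_mean n E (w(e:=x)) = Min ((\<lambda>c. a c * x + b c w) ` C)" for w x
      unfolding min_cycle_mean_def C_def cm ..
    have bres: "b c (restrict w (E - {e})) = b c w" if "c \<in> C" for c w
    proof -
      have "set (filter (\<lambda>e'. e' \<noteq> e) (cycle_edges c)) \<subseteq> E - {e}"
        using cycle_edges_in[of c n E] that unfolding C_def by auto
      then have eqm: "map (restrict w (E - {e})) (filter (\<lambda>e'. e' \<noteq> e) (cycle_edges c)) = map w (filter (\<lambda>e'. e' \<noteq> e) (cycle_edges c))"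
        by (intro map_cong) auto
      show ?thesis unfolding b_def by (simp only: eqm)
    qed
    have Yeq: "Y e k \<omega> = F (restrict (\<lambda>i. r i \<omega>) (E - {e}))" for \<omega>
    proof -
      have "(\<lambda>c. a c * x + b c (restrict (\<lambda>i. r i \<omega>) (E - {e}))) ` C = (\<lambda>c. a c * x + b c (\<lambda>i. r i \<omega>)) ` C" for x
        using bres by (intro image_cong) auto
      then show ?thesis unfolding Y_def kth_break_kb mcm F_def by simp
    qed
    have bm: "b c \<in> borel_measurable (PiM (E - {e}) (\<lambda>_. borel))" if "c \<in> C" for c
    proof -
      have "set (filter (\<lambda>e'. e' \<noteq> e) (cycle_edges c)) \<subseteq> E - {e}"
        using cycle_edges_in[of c n E] that unfolding C_def by auto
      from sumlist_meas[OF this] show ?thesis unfolding b_def by simp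
    qed
    have Fm: "F \<in> borel_measurable (PiM (E - {e}) (\<lambda>_. borel))"
      unfolding F_def by (rule kb_meas[OF finC]) (rule bm)
    have iv: "indep_var (PiM {e} (\<lambda>_. borel)) (\<lambda>\<omega>. restrict (\<lambda>i. r i \<omega>) {e})
                (PiM (E - {e}) (\<lambda>_. borel)) (\<lambda>\<omega>. restrict (\<lambda>i. r i \<omega>) (E - {e}))"
      by (rule indep_var_restrict[OF assms(5)]) (use e in auto)
    have proj: "(\<lambda>w. w e) \<in> measurable (PiM {e} (\<lambda>_. borel)) (borel :: real measure)"
      using measurable_component_singleton[of e "{e}" "\<lambda>_. borel :: real measure"] by simp
    have iv2: "indep_var borel ((\<lambda>w. w e) \<circ> (\<lambda>\<omega>. restrict (\<lambda>i. r i \<omega>) {e}))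
                 borel (F \<circ> (\<lambda>\<omega>. restrict (\<lambda>i. r i \<omega>) (E - {e})))"
      by (rule indep_var_compose[OF iv proj Fm])
    have eq1: "(\<lambda>w. w e) \<circ> (\<lambda>\<omega>. restrict (\<lambda>i. r i \<omega>) {e}) = r e" by (auto simp: fun_eq_iff)
    have eq2: "F \<circ> (\<lambda>\<omega>. restrict (\<lambda>i. r i \<omega>) (E - {e})) = Y e k" using Yeq by (auto simp: fun_eq_iff)
    have iv3: "indep_var borel (r e) borel (Y e k)" using iv2 unfolding eq1 eq2 .
    have rv1: "random_variable borel (r e)" and rv2: "random_variable borel (Y e k)"
      using iv3 by (simp_all add: indep_var_distribution_eq)
    have D: "distributed M lborel (r e) (\<lambda>y. ennreal (f e y))" using assms(6) e by auto
    have bnd: "measure M {\<omega>\<in>space M. \<bar>r e \<omega> - Y e k \<omega>\<bar> \<le> \<alpha>} \<le> 2 * \<alpha> * \<phi>"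
      by (rule prob_close[OF assms(1) D _ iv3]) (use assms(7,8,9) e in auto)
    have "{\<omega>\<in>space M. \<bar>r e \<omega> - Y e k \<omega>\<bar> \<le> \<alpha>} \<in> events"
      using rv1 rv2 by measurable
    with bnd show ?thesis by simp
  qed
  define A where "A = (\<lambda>p. {\<omega>\<in>space M. \<bar>r (fst p) \<omega> - Y (fst p) (snd p) \<omega>\<bar> \<le> \<alpha>})"
  have "{\<omega> \<in> space M. \<exists>e\<in>E. \<exists>k\<in>{1..n}. \<bar>r e \<omega> - kth_break n E e k (\<lambda>e'. r e' \<omega>)\<bar> \<le> \<alpha>}
        = (\<Union>p\<in>E \<times> {1..n}. A p)" unfolding A_def Y_def by force
  also have "measure M \<dots> \<le> (\<Sum>p\<in>E \<times> {1..n}. measure M (A p))"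
    using key finE unfolding A_def by (intro measure_subadditive_finite) (auto simp: emeasure_eq_measure)
  also have "\<dots> \<le> (\<Sum>p\<in>E \<times> {1..n}. 2 * \<alpha> * \<phi>)"
    using key unfolding A_def by (intro sum_mono) auto
  also have "\<dots> = 2 * \<alpha> * real n * real (card E) * \<phi>"
    using finE by (simp add: card_cartesian_product)
  finally show ?thesis .
qed

end
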